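(* Let $Y$ be a random simplicial complex on $[n]=\{0,\dots,n\}$ drawn from the lower model with probability parameters satisfying $p\le p_\sigma\le P$ for all $\sigma$, where $p=e^{-a}$, $P=e^{-A}$ are constants in $(0,1)$ independent of $n$ (so $0<A\le a$). For $y>0$ let $\beta(n,y)=\log_2\ln n+\log_2\log_2\ln n-\log_2 y$. Let $\epsilon_0>0$ be a fixed constant. Then asymptotically almost surely $$\lfloor\beta(n,a)\rfloor-1\le\dim Y\le\beta(n,A)-1+\epsilon_0.$$
   Context: Lower model: each non-empty proper subset $\sigma\subsetneq[n]$ is included independently with probability $p_\sigma$ into a random hypergraph $X$, and $Y$ is the largest simplicial complex contained in $X$ ($\sigma\in Y$ iff every non-empty $\tau\subseteq\sigma$ lies in $X$). A simplex $\sigma$ has dimension $|\sigma|-1$. Asymptotically almost surely means with probability tending to $1$ as $n\to\infty$. *)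

theory Defs
  imports "HOL-Probability.Probability"
begin

definition faces_of :: "nat \<Rightarrow> nat set set" where
  "faces_of n = {\<sigma>. \<sigma> \<noteq> {} \<and> \<sigma> \<subset> {0..n}}"

text \<open>Lower model hypergraph X: each candidate face \<sigma> is included independently
  with probability p \<sigma>; X is represented by its indicator function.\<close>
definition lower_model_hypergraph :: "nat \<Rightarrow> (nat set \<Rightarrow> real) \<Rightarrow> (nat set \<Rightarrow> bool) pmf" where
  "lower_model_hypergraph n p = Pi_pmf (faces_of n) False (\<lambda>\<sigma>. bernoulli_pmf (p \<sigma>))"

text \<open>Largest simplicial complex contained in X.\<close>
definition lower_complex :: "(nat set \<Rightarrow> bool) \<Rightarrow> nat set set" where
  "lower_complex X = {\<sigma>. \<sigma> \<noteq> {} \<and> (\<forall>\<tau>. \<tau> \<noteq> {} \<and> \<tau> \<subseteq> \<sigma> \<longrightarrow> X \<tau>)}"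

definition complex_dim :: "nat set set \<Rightarrow> int" where
  "complex_dim Y = (if Y = {} then -1 else int (Max (card ` Y)) - 1)"

definition beta_fn :: "nat \<Rightarrow> real \<Rightarrow> real" where
  "beta_fn n y = log 2 (ln (real n)) + log 2 (log 2 (ln (real n))) - log 2 y"

end

theory Submission
  imports Defs "HOL-Real_Asymp.Real_Asymp"
begin

definition Fs :: "nat set \<Rightarrow> nat set set" where "Fs \<sigma> = {\<tau>. \<tau> \<noteq> {} \<and> \<tau> \<subseteq> \<sigma>}"
definition Gs :: "nat set \<Rightarrow> (nat set \<Rightarrow> bool) set" where "Gs \<sigma> = {X. \<forall>\<tau>\<in>Fs \<sigma>. X \<tau>}"

lemma finite_faces: "finite (faces_of n)"
  unfolding faces_of_def by (rule finite_subset[of _ "Pow {0..n}"]) auto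

lemma finite_Fs: "finite \<sigma> \<Longrightarrow> finite (Fs \<sigma>)"
  unfolding Fs_def by (rule finite_subset[of _ "Pow \<sigma>"]) auto

lemma card_Fs: "finite \<sigma> \<Longrightarrow> card (Fs \<sigma>) = 2 ^ card \<sigma> - 1"
proof -
  assume f: "finite \<sigma>"
  have "Fs \<sigma> = Pow \<sigma> - {{}}" by (auto simp: Fs_def)
  thus ?thesis using f by (simp add: card_Pow)
qed

lemma Fs_inter: "Fs \<sigma> \<inter> Fs \<sigma>' = Fs (\<sigma> \<inter> \<sigma>')" by (auto simp: Fs_def)
lemma Gs_inter: "Gs \<sigma> \<inter> Gs \<sigma>' = {X. \<forall>\<tau>\<in>Fs \<sigma> \<union> Fs \<sigma>'. X \<tau>}" by (auto simp: Gs_def)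

lemma prob_all:
  assumes "finite H" "H \<subseteq> faces_of n" "\<And>\<tau>. \<tau> \<in> H \<Longrightarrow> 0 \<le> q \<tau> \<and> q \<tau> \<le> 1"
  shows "measure_pmf.prob (lower_model_hypergraph n q) {X. \<forall>\<tau>\<in>H. X \<tau>} = (\<Prod>\<tau>\<in>H. q \<tau>)"
proof -
  have eq: "{X. \<forall>\<tau>\<in>H. X \<tau>} = Pi (faces_of n) (\<lambda>\<tau>. if \<tau> \<in> H then {True} else UNIV)"
    using assms(2) by (auto simp: Pi_def)
  have "measure_pmf.prob (lower_model_hypergraph n q) {X. \<forall>\<tau>\<in>H. X \<tau>}
        = (\<Prod>\<tau>\<in>faces_of n. measure_pmf.prob (bernoulli_pmf (q \<tau>)) (if \<tau> \<in> H then {True} else UNIV))"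
    unfolding eq lower_model_hypergraph_def by (rule measure_Pi_pmf_Pi[OF finite_faces])
  also have "\<dots> = (\<Prod>\<tau>\<in>faces_of n. if \<tau> \<in> H then q \<tau> else 1)"
    by (rule prod.cong) (auto simp: measure_pmf_single assms(3))
  also have "\<dots> = (\<Prod>\<tau>\<in>H. q \<tau>)"
    using assms(2) by (subst prod.If_cases[OF finite_faces]) (simp add: Int_absorb2 Int_commute)
  finally show ?thesis .
qed

lemma support_faces:
  assumes "X \<in> set_pmf (lower_model_hypergraph n q)" "X \<tau>"
  shows "\<tau> \<in> faces_of n"
  using set_Pi_pmf_subset[OF finite_faces, of n False "\<lambda>\<sigma>. bernoulli_pmf (q \<sigma>)"] assms
  unfolding lower_model_hypergraph_def by auto

lemma prob_zero:
  assumes "\<not> H \<subseteq> faces_of n"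
  shows "measure_pmf.prob (lower_model_hypergraph n q) {X. \<forall>\<tau>\<in>H. X \<tau>} = 0"
  using assms support_faces by (auto simp: measure_pmf_zero_iff)

lemma finite_support: "finite (set_pmf (lower_model_hypergraph n q))"
proof -
  have "set_pmf (lower_model_hypergraph n q) \<subseteq> PiE_dflt (faces_of n) False (set_pmf \<circ> (\<lambda>\<sigma>. bernoulli_pmf (q \<sigma>)))"
    unfolding lower_model_hypergraph_def by (rule set_Pi_pmf_subset'[OF finite_faces])
  moreover have "finite (PiE_dflt (faces_of n) False (set_pmf \<circ> (\<lambda>\<sigma>. bernoulli_pmf (q \<sigma>))))"
    by (rule finite_PiE_dflt[OF finite_faces]) (rule finite_subset[of _ UNIV], auto)
  ultimately show ?thesis by (rule finite_subset)
qed

lemma prob_Gs_le: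
  assumes "finite \<sigma>" "\<And>\<tau>. \<tau> \<in> faces_of n \<Longrightarrow> 0 \<le> q \<tau> \<and> q \<tau> \<le> c"  "c \<le> 1" "0 \<le> c"
  shows "measure_pmf.prob (lower_model_hypergraph n q) (Gs \<sigma>) \<le> c ^ (2 ^ card \<sigma> - 1)"
proof (cases "Fs \<sigma> \<subseteq> faces_of n")
  case True
  have "measure_pmf.prob (lower_model_hypergraph n q) (Gs \<sigma>) = (\<Prod>\<tau>\<in>Fs \<sigma>. q \<tau>)"
    unfolding Gs_def using True assms by (intro prob_all finite_Fs) (auto, meson order_trans subsetD)
  also have "\<dots> \<le> (\<Prod>\<tau>\<in>Fs \<sigma>. c)"
    using True assms by (intro prod_mono) auto
  also have "\<dots> = c ^ (2 ^ card \<sigma> - 1)" using card_Fs[OF assms(1)] by simp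
  finally show ?thesis .
next
  case False
  then show ?thesis unfolding Gs_def using prob_zero[OF False] assms(4) by simp
qed

lemma binom_ratio:
  "j \<le> k \<Longrightarrow> k \<le> m \<Longrightarrow> real ((m - j) choose (k - j)) * real m ^ j \<le> real k ^ j * real (m choose k)"
proof (induction j arbitrary: m k)
  case 0
  then show ?case by simp
next
  case (Suc j)
  obtain m' k' where mk: "m = Suc m'" "k = Suc k'" using Suc.prems
    by (metis Suc_le_D le_trans)
  have kj: "j \<le> k'" "k' \<le> m'" using Suc.prems mk by auto
  have IH: "real ((m' - j) choose (k' - j)) * real m' ^ j \<le> real k' ^ j * real (m' choose k')"
    using Suc.IH[OF kj] .
  have abs: "real (Suc m') * real (m' choose k') = real (Suc m' choose Suc k') * real (Suc k')"
    using Suc_times_binomial_eq[of m' k'] by (metis of_nat_mult)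
  have key: "(real k' * real (Suc m')) ^ j \<le> (real (Suc k') * real m') ^ j"
    using kj by (intro power_mono) (auto simp: algebra_simps)
  show ?case
  proof (cases "m' = 0")
    case True
    then have "k' = 0" "j = 0" using kj by auto
    then show ?thesis using True mk by simp
  next
    case False
    define C where "C = real ((m' - j) choose (k' - j))"
    have C0: "0 \<le> C" by (simp add: C_def)
    have "C * real (Suc m') ^ Suc j * real m' ^ j = (C * real m' ^ j) * (real (Suc m') ^ j * real (Suc m'))"
      by (simp add: algebra_simps)
    also have "\<dots> \<le> (real k' ^ j * real (m' choose k')) * (real (Suc m') ^ j * real (Suc m'))"
      using IH by (intro mult_right_mono) (auto simp: C_def)
    also have "\<dots> = (real k' * real (Suc m')) ^ j * (real (Suc m') * real (m' choose k'))"
      unfolding power_mult_distrib by (simp only: mult_ac)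
    also have "\<dots> = (real k' * real (Suc m')) ^ j * (real (Suc m' choose Suc k') * real (Suc k'))"
      by (simp only: abs)
    also have "\<dots> \<le> (real (Suc k') * real m') ^ j * (real (Suc m' choose Suc k') * real (Suc k'))"
      using key by (intro mult_right_mono) auto
    also have "\<dots> = (real (Suc k') ^ Suc j * real (Suc m' choose Suc k')) * real m' ^ j"
      unfolding power_mult_distrib power_Suc by (simp only: mult_ac)
    finally have "C * real (Suc m') ^ Suc j * real m' ^ j \<le> (real (Suc k') ^ Suc j * real (Suc m' choose Suc k')) * real m' ^ j" .
    then have "C * real (Suc m') ^ Suc j \<le> real (Suc k') ^ Suc j * real (Suc m' choose Suc k')"
      using False by (simp add: mult_le_cancel_right)
    then show ?thesis using mk by (simp add: C_def)
  qed
qed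

lemma pow2_ratio: assumes "1 \<le> j" "j \<le> k" shows "(2::nat) ^ j * k \<le> 2 ^ k * j"
  using assms(2)
proof (induction k rule: dec_induct)
  case base
  then show ?case by simp
next
  case (step k)
  have "(2::nat) ^ j \<le> 2 ^ k" using step.hyps by (simp add: power_increasing)
  also have "\<dots> \<le> 2 ^ k * j" using assms(1) by simp
  finally have "(2::nat) ^ j \<le> 2 ^ k * j" .
  then show ?case using step.IH by simp
qed

lemma count_supsets:
  assumes "finite A" "T \<subseteq> A"
  shows "card {S. S \<subseteq> A \<and> card S = k \<and> T \<subseteq> S} \<le> (card A - card T) choose (k - card T)"
proof -
  have fT: "finite T" using assms finite_subset by blast
  have "card {S. S \<subseteq> A \<and> card S = k \<and> T \<subseteq> S} \<le> card {U. U \<subseteq> A - T \<and> card U = k - card T}"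
  proof (rule card_inj_on_le[where f = "\<lambda>S. S - T"])
    show "inj_on (\<lambda>S. S - T) {S. S \<subseteq> A \<and> card S = k \<and> T \<subseteq> S}"
      by (auto simp: inj_on_def)
    show "(\<lambda>S. S - T) ` {S. S \<subseteq> A \<and> card S = k \<and> T \<subseteq> S} \<subseteq> {U. U \<subseteq> A - T \<and> card U = k - card T}"
      using fT by (auto simp: card_Diff_subset)
    show "finite {U. U \<subseteq> A - T \<and> card U = k - card T}"
      using assms by simp
  qed
  also have "\<dots> = card (A - T) choose (k - card T)" by (rule n_subsets) (use assms in simp)
  also have "card (A - T) = card A - card T" using assms fT by (simp add: card_Diff_subset)
  finally show ?thesis .
qed

lemma exp_ind: "measure_pmf.expectation M (indicator A :: _ \<Rightarrow> real) = measure_pmf.prob M A"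
  by (simp add: measure_pmf.emeasure_eq_measure)

lemma second_moment:
  fixes M :: "'a pmf" and S :: "'i set" and G :: "'i \<Rightarrow> 'a set" and q :: "'i \<Rightarrow> real"
  assumes fin: "finite (set_pmf M)" and fS: "finite S" and Sne: "S \<noteq> {}"
    and qpos: "\<And>s. s \<in> S \<Longrightarrow> q s > 0"
    and pq: "\<And>s. s \<in> S \<Longrightarrow> measure_pmf.prob M (G s) = q s"
    and bound: "(\<Sum>s\<in>S. \<Sum>t\<in>S. measure_pmf.prob M (G s \<inter> G t) / (q s * q t)) \<le> real (card S) ^ 2 * (1 + r)"
  shows "measure_pmf.prob M {x. \<forall>s\<in>S. x \<notin> G s} \<le> r"
proof -
  define N where "N = real (card S)"
  have N0: "N > 0" using fS Sne by (simp add: N_def card_gt_0_iff)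
  define Z where "Z = (\<lambda>x. \<Sum>s\<in>S. indicator (G s) x / q s :: real)"
  have int: "integrable (measure_pmf M) f" for f :: "'a \<Rightarrow> real"
    using fin by (rule integrable_measure_pmf_finite)
  have EZ: "measure_pmf.expectation M Z = N"
  proof -
    have "measure_pmf.expectation M Z = (\<Sum>s\<in>S. measure_pmf.expectation M (\<lambda>x. indicator (G s) x / q s))"
      unfolding Z_def by (simp add: integral_sum int)
    also have "\<dots> = (\<Sum>s\<in>S. 1)"
      by (intro sum.cong refl) (simp add: exp_ind pq qpos less_imp_neq[symmetric])
    finally show ?thesis by (simp add: N_def)
  qed
  have Z2: "(\<lambda>x. Z x ^ 2) = (\<lambda>x. \<Sum>s\<in>S. \<Sum>t\<in>S. indicator (G s \<inter> G t) x / (q s * q t))"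
    unfolding Z_def power2_eq_square sum_product
    by (intro ext sum.cong refl) (simp add: indicator_inter_arith)
  have EZ2: "measure_pmf.expectation M (\<lambda>x. Z x ^ 2) = (\<Sum>s\<in>S. \<Sum>t\<in>S. measure_pmf.prob M (G s \<inter> G t) / (q s * q t))"
    unfolding Z2 by (simp add: integral_sum int exp_ind)
  have "N ^ 2 * measure_pmf.prob M {x. Z x = 0} = measure_pmf.expectation M (\<lambda>x. N ^ 2 * indicator {x. Z x = 0} x)"
    by (simp add: exp_ind)
  also have "\<dots> \<le> measure_pmf.expectation M (\<lambda>x. (Z x - N) ^ 2)"
    by (intro integral_mono int) (auto simp: indicator_def)
  also have "measure_pmf.expectation M (\<lambda>x. (Z x - N) ^ 2) =
      measure_pmf.expectation M (\<lambda>x. Z x ^ 2) - 2 * N * measure_pmf.expectation M Z + N ^ 2"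
  proof -
    have "(\<lambda>x. (Z x - N) ^ 2) = (\<lambda>x. (Z x ^ 2 - 2 * N * Z x) + N ^ 2)"
      by (intro ext) (simp add: power2_eq_square algebra_simps)
    then show ?thesis
      by (simp add: int integral_add integral_diff)
  qed
  also have "\<dots> \<le> N ^ 2 * (1 + r) - N ^ 2"
    using bound unfolding EZ EZ2 by (simp add: N_def power2_eq_square)
  finally have "N ^ 2 * measure_pmf.prob M {x. Z x = 0} \<le> N ^ 2 * r" by (simp add: algebra_simps)
  then have "measure_pmf.prob M {x. Z x = 0} \<le> r" using N0 by simp
  moreover have "measure_pmf.prob M {x. \<forall>s\<in>S. x \<notin> G s} \<le> measure_pmf.prob M {x. Z x = 0}"
    by (intro measure_pmf.finite_measure_mono) (auto simp: Z_def)
  ultimately show ?thesis by linarith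
qed

lemma Fs_faces:
  assumes "\<sigma> \<subseteq> {0..n}" "card \<sigma> \<le> n"
  shows "Fs \<sigma> \<subseteq> faces_of n"
proof
  fix \<tau> assume t: "\<tau> \<in> Fs \<sigma>"
  have "\<sigma> \<noteq> {0..n}" using assms(2) by auto
  then have "\<sigma> \<subset> {0..n}" using assms(1) by auto
  then show "\<tau> \<in> faces_of n" using t by (auto simp: Fs_def faces_of_def)
qed

lemma lower_fixed:
  fixes q :: "nat set \<Rightarrow> real" and a :: real
  assumes qb: "\<And>\<tau>. \<tau> \<in> faces_of n \<Longrightarrow> exp (- a) \<le> q \<tau> \<and> q \<tau> \<le> 1"
    and k1: "1 \<le> k" and kn: "k \<le> n" and a0: "0 < a"
    and E0: "0 \<le> ln (real (Suc n) / real k) - a * 2 ^ k / real k"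
  shows "measure_pmf.prob (lower_model_hypergraph n q)
           {X. \<forall>\<sigma>\<in>{\<sigma>. \<sigma> \<subseteq> {0..n} \<and> card \<sigma> = k}. X \<notin> Gs \<sigma>}
         \<le> 2 ^ k * exp (- (ln (real (Suc n) / real k) - a * 2 ^ k / real k))"
proof -
  define E where "E = ln (real (Suc n) / real k) - a * 2 ^ k / real k"
  define S where "S = {\<sigma>. \<sigma> \<subseteq> {0..n} \<and> card \<sigma> = k}"
  define m where "m = Suc n"
  define Q where "Q = (\<lambda>\<sigma>. \<Prod>\<tau>\<in>Fs \<sigma>. q \<tau>)"
  define N where "N = real (card S)"
  define M where "M = lower_model_hypergraph n q"
  have fS: "finite S" unfolding S_def by (rule finite_subset[of _ "Pow {0..n}"]) auto
  have cardS: "card S = m choose k" unfolding S_def m_def using n_subsets[of "{0..n}" k] by simp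
  have Sne: "S \<noteq> {}" using cardS kn by (auto simp: m_def)
  have N0: "N > 0" using Sne fS by (simp add: N_def card_gt_0_iff)
  have SF: "\<sigma> \<in> S \<Longrightarrow> Fs \<sigma> \<subseteq> faces_of n" for \<sigma>
    using kn by (intro Fs_faces) (auto simp: S_def)
  have finS: "\<sigma> \<in> S \<Longrightarrow> finite \<sigma>" for \<sigma> by (auto simp: S_def intro: finite_subset)
  have qpos: "\<tau> \<in> faces_of n \<Longrightarrow> 0 < q \<tau>" for \<tau>
    using qb[of \<tau>] by (meson exp_gt_zero less_le_trans)
  have Qpos: "\<sigma> \<in> S \<Longrightarrow> Q \<sigma> > 0" for \<sigma>
    unfolding Q_def using SF qpos by (intro prod_pos) auto
  have pQ: "\<sigma> \<in> S \<Longrightarrow> measure_pmf.prob M (Gs \<sigma>) = Q \<sigma>" for \<sigma>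
    unfolding M_def Q_def Gs_def using SF[of \<sigma>] qb qpos
    by (intro prob_all finite_Fs finS) (auto simp: less_imp_le)
  define w where "w = (\<lambda>j::nat. exp a ^ (2 ^ j - 1))"
  have ratio: "measure_pmf.prob M (Gs \<sigma> \<inter> Gs \<sigma>') / (Q \<sigma> * Q \<sigma>') \<le> w (card (\<sigma> \<inter> \<sigma>'))"
    if s: "\<sigma> \<in> S" "\<sigma>' \<in> S" for \<sigma> \<sigma>'
  proof -
    have fin: "finite (Fs \<sigma>)" "finite (Fs \<sigma>')" using s finS finite_Fs by auto
    have "measure_pmf.prob M (Gs \<sigma> \<inter> Gs \<sigma>') = (\<Prod>\<tau>\<in>Fs \<sigma> \<union> Fs \<sigma>'. q \<tau>)"
      unfolding M_def Gs_inter using SF[OF s(1)] SF[OF s(2)] qb qpos fin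
      by (intro prob_all) (auto simp: less_imp_le)
    moreover have "(\<Prod>\<tau>\<in>Fs \<sigma> \<union> Fs \<sigma>'. q \<tau>) * (\<Prod>\<tau>\<in>Fs (\<sigma> \<inter> \<sigma>'). q \<tau>) = Q \<sigma> * Q \<sigma>'"
      unfolding Q_def Fs_inter[symmetric] by (rule prod.union_inter[OF fin])
    moreover have I: "(\<Prod>\<tau>\<in>Fs (\<sigma> \<inter> \<sigma>'). q \<tau>) \<ge> exp (- a) ^ (2 ^ card (\<sigma> \<inter> \<sigma>') - 1)"
    proof -
      have "Fs (\<sigma> \<inter> \<sigma>') \<subseteq> faces_of n" using SF[OF s(1)] by (auto simp: Fs_def)
      then have "(\<Prod>\<tau>\<in>Fs (\<sigma> \<inter> \<sigma>'). exp (- a)) \<le> (\<Prod>\<tau>\<in>Fs (\<sigma> \<inter> \<sigma>'). q \<tau>)"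
        using qb by (intro prod_mono) auto
      moreover have "card (Fs (\<sigma> \<inter> \<sigma>')) = 2 ^ card (\<sigma> \<inter> \<sigma>') - 1"
        using s finS by (intro card_Fs) auto
      ultimately show ?thesis by simp
    qed
    moreover have P0: "(\<Prod>\<tau>\<in>Fs (\<sigma> \<inter> \<sigma>'). q \<tau>) > 0"
      using SF[OF s(1)] qpos by (intro prod_pos) (auto simp: Fs_def)
    moreover note Qpos[OF s(1)] Qpos[OF s(2)]
    ultimately have "measure_pmf.prob M (Gs \<sigma> \<inter> Gs \<sigma>') / (Q \<sigma> * Q \<sigma>') = 1 / (\<Prod>\<tau>\<in>Fs (\<sigma> \<inter> \<sigma>'). q \<tau>)"
      by (auto simp: field_simps)
    also have "\<dots> \<le> 1 / exp (- a) ^ (2 ^ card (\<sigma> \<inter> \<sigma>') - 1)"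
      using I P0 by (intro divide_left_mono) (auto intro!: mult_pos_pos)
    also have "\<dots> = w (card (\<sigma> \<inter> \<sigma>'))" by (simp add: w_def exp_minus power_inverse field_simps)
    finally show ?thesis .
  qed
  have Epos: "0 \<le> E" using E0 by (simp add: E_def)
  have kpos: "real k > 0" using k1 by simp
  have mk: "real m \<ge> real k" using kn by (simp add: m_def)
  have perj: "w j * (real k / real m) ^ j \<le> exp (- E)" if j: "1 \<le> j" "j \<le> k" for j
  proof -
    have wj: "w j \<le> exp (a * 2 ^ j)"
    proof -
      have "w j = exp (real (2 ^ j - 1) * a)" unfolding w_def by (rule exp_of_nat_mult[symmetric])
      also have "\<dots> \<le> exp (a * 2 ^ j)" using a0 by (simp add: of_nat_diff)
      finally show ?thesis .
    qed
    have kmj: "(real k / real m) ^ j = exp (- (real j * ln (real m / real k)))"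
    proof -
      have "(real k / real m) ^ j = exp (real j * ln (real k / real m))"
        using kpos mk by (subst exp_of_nat_mult) simp
      also have "ln (real k / real m) = - ln (real m / real k)"
        using kpos mk by (simp add: ln_div)
      finally show ?thesis by simp
    qed
    have "a * 2 ^ j \<le> real j * (a * 2 ^ k / real k)"
    proof -
      have "real (2 ^ j * k) \<le> real (2 ^ k * j)" using pow2_ratio[OF j] by linarith
      then have "2 ^ j * real k \<le> 2 ^ k * real j" by simp
      then have "2 ^ j \<le> 2 ^ k * real j / real k" using kpos by (simp add: field_simps)
      then have "a * 2 ^ j \<le> a * (2 ^ k * real j / real k)" using a0 by (intro mult_left_mono) auto
      then show ?thesis by (simp add: mult_ac)
    qed
    have "w j * (real k / real m) ^ j \<le> exp (a * 2 ^ j) * exp (- (real j * ln (real m / real k)))"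
      unfolding kmj[symmetric] using kpos by (intro mult_right_mono wj) auto
    also have "\<dots> = exp (a * 2 ^ j - real j * ln (real m / real k))" by (simp add: exp_diff exp_minus field_simps)
    also have "\<dots> \<le> exp (- (real j * E))"
      using \<open>a * 2 ^ j \<le> real j * (a * 2 ^ k / real k)\<close> by (simp add: E_def m_def algebra_simps)
    also have "\<dots> \<le> exp (- E)" using Epos j by (simp add: mult_le_cancel_right1)
    finally show ?thesis .
  qed
  have Nm: "N = real (m choose k)" using cardS by (simp add: N_def)
  have inner: "(\<Sum>\<sigma>'\<in>S. w (card (\<sigma> \<inter> \<sigma>'))) \<le> N + N * (2 ^ k * exp (- E))" if s: "\<sigma> \<in> S" for \<sigma>
  proof -
    define B where "B = {\<sigma>'. \<sigma> \<inter> \<sigma>' = {}}"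
    have split: "(\<Sum>\<sigma>'\<in>S. w (card (\<sigma> \<inter> \<sigma>'))) = (\<Sum>\<sigma>'\<in>S \<inter> B. w (card (\<sigma> \<inter> \<sigma>'))) + (\<Sum>\<sigma>'\<in>S - B. w (card (\<sigma> \<inter> \<sigma>')))"
      by (rule sum.Int_Diff[OF fS])
    have d: "(\<Sum>\<sigma>'\<in>S \<inter> B. w (card (\<sigma> \<inter> \<sigma>'))) \<le> N"
    proof -
      have "(\<Sum>\<sigma>'\<in>S \<inter> B. w (card (\<sigma> \<inter> \<sigma>'))) = real (card (S \<inter> B))" by (simp add: B_def w_def)
      also have "\<dots> \<le> N" unfolding N_def using fS by (simp add: card_mono)
      finally show ?thesis .
    qed
    have fsig: "finite \<sigma>" "card \<sigma> = k" "\<sigma> \<subseteq> {0..n}" using finS[OF s] s unfolding S_def by simp_all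
    have "(\<Sum>\<sigma>'\<in>S - B. w (card (\<sigma> \<inter> \<sigma>'))) = (\<Sum>T\<in>Fs \<sigma>. \<Sum>\<sigma>'\<in>{x. x \<in> S - B \<and> \<sigma> \<inter> x = T}. w (card (\<sigma> \<inter> \<sigma>')))"
      proof (rule sum.group[of "S - B" "Fs \<sigma>" "\<lambda>x. \<sigma> \<inter> x" "\<lambda>\<sigma>'. w (card (\<sigma> \<inter> \<sigma>'))", symmetric])
        show "finite (S - B)" using fS by simp
        show "finite (Fs \<sigma>)" using fsig by (simp add: finite_Fs)
        show "(\<lambda>x. \<sigma> \<inter> x) ` (S - B) \<subseteq> Fs \<sigma>" by (auto simp: B_def Fs_def)
      qed
    also have "\<dots> \<le> (\<Sum>T\<in>Fs \<sigma>. N * exp (- E))"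
    proof (rule sum_mono)
      fix T assume T: "T \<in> Fs \<sigma>"
      define j where "j = card T"
      have fT: "finite T" using T fsig by (auto simp: Fs_def intro: finite_subset)
      have j: "1 \<le> j" "j \<le> k" using T fT fsig
      proof -
        have "T \<noteq> {}" "T \<subseteq> \<sigma>" using T by (auto simp: Fs_def)
        then show "1 \<le> j" using fT by (simp add: j_def Suc_le_eq card_gt_0_iff)
        show "j \<le> k" using card_mono[OF fsig(1) \<open>T \<subseteq> \<sigma>\<close>] fsig(2) by (simp add: j_def)
      qed
      define cnt where "cnt = real (card {x. x \<in> S - B \<and> \<sigma> \<inter> x = T})"
      have eq1: "(\<Sum>\<sigma>'\<in>{x. x \<in> S - B \<and> \<sigma> \<inter> x = T}. w (card (\<sigma> \<inter> \<sigma>'))) = w j * cnt"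
        by (simp add: j_def cnt_def)
      have c1: "cnt \<le> real ((m - j) choose (k - j))"
      proof -
        have "card {x. x \<in> S - B \<and> \<sigma> \<inter> x = T} \<le> card {x. x \<subseteq> {0..n} \<and> card x = k \<and> T \<subseteq> x}"
        proof (rule card_mono)
          show "finite {x. x \<subseteq> {0..n} \<and> card x = k \<and> T \<subseteq> x}"
            by (rule finite_subset[of _ "Pow {0..n}"]) auto
          show "{x. x \<in> S - B \<and> \<sigma> \<inter> x = T} \<subseteq> {x. x \<subseteq> {0..n} \<and> card x = k \<and> T \<subseteq> x}"
            unfolding S_def by blast
        qed
        moreover have "card {x. x \<subseteq> {0..n} \<and> card x = k \<and> T \<subseteq> x} \<le> (card {0..n} - card T) choose (k - card T)"
          using T fsig by (intro count_supsets) (auto simp: Fs_def)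
        ultimately have "card {x. x \<in> S - B \<and> \<sigma> \<inter> x = T} \<le> (m - j) choose (k - j)"
          by (simp add: j_def m_def)
        then show ?thesis unfolding cnt_def by linarith
      qed
      have c2: "real ((m - j) choose (k - j)) \<le> (real k / real m) ^ j * N"
      proof -
        have h: "real ((m - j) choose (k - j)) * real m ^ j \<le> real k ^ j * N"
          unfolding Nm using j kn by (intro binom_ratio) (auto simp: m_def)
        have mpos: "real m ^ j > 0" using mk kpos by simp
        have "real ((m - j) choose (k - j)) \<le> real k ^ j * N / real m ^ j"
          using h mpos by (simp add: pos_le_divide_eq)
        also have "\<dots> = (real k / real m) ^ j * N" by (simp add: power_divide)
        finally show ?thesis .
      qed
      have w0: "0 \<le> w j" by (simp add: w_def)
      have "w j * cnt \<le> w j * ((real k / real m) ^ j * N)"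
        using c1 c2 w0 by (intro mult_left_mono) auto
      also have "\<dots> = (w j * (real k / real m) ^ j) * N" by simp
      also have "\<dots> \<le> exp (- E) * N" using perj[OF j] N0 by (intro mult_right_mono) auto
      finally show "(\<Sum>\<sigma>'\<in>{x. x \<in> S - B \<and> \<sigma> \<inter> x = T}. w (card (\<sigma> \<inter> \<sigma>'))) \<le> N * exp (- E)"
        unfolding eq1 by (simp add: mult.commute)
    qed
    also have "\<dots> = real (card (Fs \<sigma>)) * (N * exp (- E))" by simp
    also have "\<dots> \<le> 2 ^ k * (N * exp (- E))"
      using card_Fs[OF fsig(1)] fsig N0 by (intro mult_right_mono) auto
    finally show ?thesis using split d by (simp add: algebra_simps)
  qed
  have bound: "(\<Sum>s\<in>S. \<Sum>t\<in>S. measure_pmf.prob M (Gs s \<inter> Gs t) / (Q s * Q t)) \<le> real (card S) ^ 2 * (1 + 2 ^ k * exp (- E))"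
  proof -
    have "(\<Sum>s\<in>S. \<Sum>t\<in>S. measure_pmf.prob M (Gs s \<inter> Gs t) / (Q s * Q t)) \<le> (\<Sum>s\<in>S. \<Sum>t\<in>S. w (card (s \<inter> t)))"
      by (intro sum_mono ratio)
    also have "\<dots> \<le> (\<Sum>s\<in>S. N + N * (2 ^ k * exp (- E)))"
      by (intro sum_mono inner)
    also have "\<dots> = real (card S) ^ 2 * (1 + 2 ^ k * exp (- E))"
      by (simp add: N_def power2_eq_square algebra_simps)
    finally show ?thesis .
  qed
  have "measure_pmf.prob M {x. \<forall>s\<in>S. x \<notin> Gs s} \<le> 2 ^ k * exp (- E)"
    by (rule second_moment[OF _ fS Sne Qpos pQ bound]) (simp add: M_def finite_support)
  then show ?thesis by (simp add: M_def S_def E_def)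
qed

lemma lower_complex_faces:
  assumes "X \<in> set_pmf (lower_model_hypergraph n q)"
  shows "lower_complex X \<subseteq> faces_of n" "finite (lower_complex X)"
proof -
  show *: "lower_complex X \<subseteq> faces_of n"
  proof
    fix \<sigma> assume "\<sigma> \<in> lower_complex X"
    then have "X \<sigma>" by (auto simp: lower_complex_def)
    then show "\<sigma> \<in> faces_of n" using support_faces[OF assms] by blast
  qed
  show "finite (lower_complex X)" using * finite_faces finite_subset by blast
qed

lemma upper_fixed:
  fixes q :: "nat set \<Rightarrow> real" and A b :: real
  assumes qb: "\<And>\<tau>. \<tau> \<in> faces_of n \<Longrightarrow> 0 \<le> q \<tau> \<and> q \<tau> \<le> exp (- A)"
    and A0: "0 < A" and b0: "0 \<le> b"
  shows "measure_pmf.prob (lower_model_hypergraph n q)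
           {X. b - 1 < real_of_int (complex_dim (lower_complex X))}
         \<le> real (Suc n) ^ (nat \<lfloor>b\<rfloor> + 1) * exp (- A) ^ (2 ^ (nat \<lfloor>b\<rfloor> + 1) - 1)"
proof -
  define k0 where "k0 = nat \<lfloor>b\<rfloor> + 1"
  define S0 where "S0 = {T. T \<subseteq> {0..n} \<and> card T = k0}"
  define M where "M = lower_model_hypergraph n q"
  define Ev where "Ev = {X. b - 1 < real_of_int (complex_dim (lower_complex X))}"
  have fS0: "finite S0" unfolding S0_def by (rule finite_subset[of _ "Pow {0..n}"]) auto
  have sub: "Ev \<inter> set_pmf M \<subseteq> (\<Union>T\<in>S0. Gs T)"
  proof
    fix X assume X: "X \<in> Ev \<inter> set_pmf M"
    define Y where "Y = lower_complex X"
    have YF: "Y \<subseteq> faces_of n" "finite Y" using lower_complex_faces[of X n q] X by (auto simp: Y_def M_def)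
    have dimb: "b - 1 < real_of_int (complex_dim Y)" using X by (simp add: Ev_def Y_def)
    have Yne: "Y \<noteq> {}"
    proof
      assume "Y = {}"
      then have "complex_dim Y = -1" by (simp add: complex_dim_def)
      then show False using dimb b0 by simp
    qed
    obtain \<sigma> where s: "\<sigma> \<in> Y" "card \<sigma> = Max (card ` Y)"
    proof -
      have "Max (card ` Y) \<in> card ` Y" using YF Yne by (intro Max_in) auto
      then show ?thesis using that by (metis imageE)
    qed
    have "complex_dim Y = int (card \<sigma>) - 1" using Yne s by (simp add: complex_dim_def)
    then have bs: "b < real (card \<sigma>)" using dimb by simp
    have "real_of_int \<lfloor>b\<rfloor> < real (card \<sigma>)" using bs of_int_floor_le[of b] by linarith
    then have "\<lfloor>b\<rfloor> < int (card \<sigma>)" by linarith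
    then have k0s: "k0 \<le> card \<sigma>" unfolding k0_def using b0 by linarith
    have sF: "\<sigma> \<in> faces_of n" using s YF by auto
    then have sfin: "finite \<sigma>" "\<sigma> \<subseteq> {0..n}" by (auto simp: faces_of_def intro: finite_subset)
    obtain T where T: "T \<subseteq> \<sigma>" "card T = k0" using obtain_subset_with_card_n[OF k0s] by blast
    have "T \<in> S0" using T sfin by (auto simp: S0_def)
    moreover have "X \<in> Gs T"
      using s(1) T unfolding Gs_def Fs_def Y_def lower_complex_def by auto
    ultimately show "X \<in> (\<Union>T\<in>S0. Gs T)" by blast
  qed
  have "measure_pmf.prob M Ev = measure_pmf.prob M (Ev \<inter> set_pmf M)"
    by (simp add: measure_Int_set_pmf)
  also have "\<dots> \<le> measure_pmf.prob M (\<Union>T\<in>S0. Gs T)"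
    using sub by (intro measure_pmf.finite_measure_mono) auto
  also have "\<dots> \<le> (\<Sum>T\<in>S0. measure_pmf.prob M (Gs T))"
    by (intro measure_pmf.finite_measure_subadditive_finite fS0) auto
  also have "\<dots> \<le> (\<Sum>T\<in>S0. exp (- A) ^ (2 ^ k0 - 1))"
  proof (intro sum_mono)
    fix T assume "T \<in> S0"
    then have "finite T" "card T = k0" by (auto simp: S0_def intro: finite_subset)
    then show "measure_pmf.prob M (Gs T) \<le> exp (- A) ^ (2 ^ k0 - 1)"
      unfolding M_def using prob_Gs_le[of T n q "exp (- A)"] qb A0 by simp
  qed
  also have "\<dots> = real (card S0) * exp (- A) ^ (2 ^ k0 - 1)" by simp
  also have "\<dots> \<le> real (Suc n) ^ k0 * exp (- A) ^ (2 ^ k0 - 1)"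
  proof (intro mult_right_mono)
    have "card S0 = Suc n choose k0" unfolding S0_def using n_subsets[of "{0..n}" k0] by simp
    also have "\<dots> \<le> Suc n ^ k0"
      by (cases "k0 \<le> Suc n") (auto intro: binomial_le_pow simp: binomial_eq_0)
    finally show "real (card S0) \<le> real (Suc n) ^ k0" by (metis of_nat_le_iff of_nat_power)
  qed simp
  finally show ?thesis by (simp add: M_def Ev_def k0_def)
qed

lemma two_powr_beta:
  assumes "1 < ln (real n)" "0 < y"
  shows "2 powr beta_fn n y = ln (real n) * log 2 (ln (real n)) / y"
proof -
  have L: "0 < log 2 (ln (real n))" using assms by simp
  have "2 powr beta_fn n y = 2 powr (log 2 (ln (real n))) * 2 powr (log 2 (log 2 (ln (real n)))) / 2 powr (log 2 y)"
    unfolding beta_fn_def by (simp add: powr_add powr_diff)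
  also have "\<dots> = ln (real n) * log 2 (ln (real n)) / y"
    using assms L by simp
  finally show ?thesis .
qed

lemma exp_to_zero:
  fixes g :: "nat \<Rightarrow> real"
  assumes "0 < d" "filterlim g at_top sequentially"
  shows "(\<lambda>n. exp (- (d * g n))) \<longlonglongrightarrow> 0"
proof -
  have "filterlim (\<lambda>n. d * g n) at_top sequentially"
    by (rule filterlim_tendsto_pos_mult_at_top[OF tendsto_const assms(1) assms(2)])
  then have "filterlim (\<lambda>n. - (d * g n)) at_bot sequentially"
    by (simp add: filterlim_uminus_at_top)
  then show ?thesis by (rule filterlim_compose[OF exp_at_bot])
qed

lemma upper_bound_n:
  fixes A \<epsilon> :: real and n :: nat
  defines "L \<equiv> log 2 (ln (real n))"
  defines "h \<equiv> ((beta_fn n A + \<epsilon> + 1) * ln (real (Suc n)) - L * ln (real n) + A) / (L * ln (real n))"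
  assumes A0: "0 < A" and e0: "0 < \<epsilon>" and ln1: "1 < ln (real n)" and b0: "0 \<le> beta_fn n A"
    and hd: "h \<le> (2 powr \<epsilon> - 1) / 2"
  shows "real (Suc n) ^ (nat \<lfloor>beta_fn n A + \<epsilon>\<rfloor> + 1) * exp (- A) ^ (2 ^ (nat \<lfloor>beta_fn n A + \<epsilon>\<rfloor> + 1) - 1)
         \<le> exp (- ((2 powr \<epsilon> - 1) / 2 * (L * ln (real n))))"
proof -
  define b where "b = beta_fn n A + \<epsilon>"
  define k0 where "k0 = nat \<lfloor>b\<rfloor> + 1"
  define K where "K = real k0"
  define c where "c = 2 powr \<epsilon>"
  define g where "g = L * ln (real n)"
  have Lp: "0 < L" using ln1 by (simp add: L_def)
  have gp: "0 < g" using Lp ln1 by (simp add: g_def)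
  have bnn: "0 \<le> b" using b0 e0 by (simp add: b_def)
  have Kb: "b < K" "K \<le> b + 1" using bnn unfolding K_def k0_def
    by (simp_all add: of_nat_nat) linarith+
  have lnS: "0 \<le> ln (real (Suc n))" by simp
  have t1: "real (Suc n) ^ k0 = exp (K * ln (real (Suc n)))"
    unfolding K_def by (subst exp_of_nat_mult) simp
  have t2: "exp (- A) ^ (2 ^ k0 - 1) = exp (- (A * (2 ^ k0 - 1)))"
  proof -
    have "exp (- A) ^ (2 ^ k0 - 1) = exp (real (2 ^ k0 - 1) * (- A))" by (rule exp_of_nat_mult[symmetric])
    also have "real (2 ^ k0 - 1) = 2 ^ k0 - 1" by (simp add: of_nat_diff)
    finally show ?thesis by (simp add: algebra_simps)
  qed
  have p2: "(2::real) ^ k0 \<ge> c * (ln (real n) * L / A)"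
  proof -
    have "(2::real) ^ k0 = 2 powr K" unfolding K_def by (simp add: powr_realpow)
    also have "2 powr K \<ge> 2 powr b" using Kb by (intro powr_mono) auto
    also have "2 powr b = c * (ln (real n) * L / A)"
      unfolding b_def c_def using two_powr_beta[OF ln1 A0] by (simp add: powr_add L_def)
    finally show ?thesis by simp
  qed
  have "A * 2 ^ k0 \<ge> c * g" using p2 A0 by (simp add: g_def field_simps)
  moreover have "K * ln (real (Suc n)) \<le> (b + 1) * ln (real (Suc n))"
    using Kb lnS by (intro mult_right_mono) auto
  ultimately have X: "K * ln (real (Suc n)) - A * (2 ^ k0 - 1) \<le> (b + 1) * ln (real (Suc n)) + A - c * g"
    by (simp add: algebra_simps)
  have hg0: "h * g = (beta_fn n A + \<epsilon> + 1) * ln (real (Suc n)) - L * ln (real n) + A"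
    using Lp ln1 unfolding h_def g_def by simp
  have hg: "h * g = (b + 1) * ln (real (Suc n)) + A - g"
    using hg0 g_def unfolding b_def by linarith
  have "(b + 1) * ln (real (Suc n)) + A - c * g = g * (h - (c - 1))"
    using hg by (simp add: algebra_simps)
  also have "\<dots> \<le> g * (- ((c - 1) / 2))"
    using hd gp by (intro mult_left_mono) (auto simp: c_def field_simps)
  finally have "K * ln (real (Suc n)) - A * (2 ^ k0 - 1) \<le> - ((c - 1) / 2 * g)" using X by (simp add: algebra_simps)
  then have "exp (K * ln (real (Suc n)) - A * (2 ^ k0 - 1)) \<le> exp (- ((c - 1) / 2 * g))"
    by (simp only: exp_le_cancel_iff)
  moreover have "exp (K * ln (real (Suc n))) * exp (- (A * (2 ^ k0 - 1))) = exp (K * ln (real (Suc n)) - A * (2 ^ k0 - 1))"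
    by (simp only: exp_add[symmetric] diff_conv_add_uminus)
  ultimately have "exp (K * ln (real (Suc n))) * exp (- (A * (2 ^ k0 - 1))) \<le> exp (- ((c - 1) / 2 * g))"
    by simp
  then show ?thesis using t1 t2 by (simp add: k0_def b_def c_def g_def)
qed

lemma lower_bound_n:
  fixes a :: real and n :: nat
  defines "L \<equiv> log 2 (ln (real n))"
  defines "k \<equiv> nat \<lfloor>beta_fn n a\<rfloor>"
  assumes a0: "0 < a" and ln1: "1 < ln (real n)" and c1: "L + 2 \<le> beta_fn n a"
    and c2: "beta_fn n a \<le> real n" and c3: "beta_fn n a \<le> ln (real n) / (L + 1)"
  shows "1 \<le> k" "k \<le> n" "0 \<le> ln (real (Suc n) / real k) - a * 2 ^ k / real k"
    "2 ^ k * exp (- (ln (real (Suc n) / real k) - a * 2 ^ k / real k))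
       \<le> exp (beta_fn n a * (ln 2 + 1) - ln (real n) / (L + 1))"
proof -
  define \<beta> where "\<beta> = beta_fn n a"
  have Lp: "0 < L" using ln1 by (simp add: L_def)
  have kb: "real k \<le> \<beta>" "\<beta> - 1 < real k" using c1 Lp unfolding k_def \<beta>_def
    by (simp_all add: of_nat_nat)
  have kL: "L + 1 \<le> real k" using kb c1 by (simp add: \<beta>_def)
  then show k1: "1 \<le> k" using Lp by simp
  show "k \<le> n" using kb c2 by (simp add: \<beta>_def)
  have kpos: "0 < real k" using k1 by simp
  have p2: "a * 2 ^ k \<le> ln (real n) * L"
  proof -
    have "(2::real) ^ k = 2 powr real k" by (simp add: powr_realpow)
    also have "\<dots> \<le> 2 powr \<beta>" using kb by (intro powr_mono) auto
    also have "\<dots> = ln (real n) * L / a" unfolding \<beta>_def L_def by (rule two_powr_beta[OF ln1 a0])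
    finally show ?thesis using a0 by (simp add: field_simps)
  qed
  have q: "a * 2 ^ k / real k \<le> ln (real n) - ln (real n) / (L + 1)"
  proof -
    have "a * 2 ^ k / real k \<le> ln (real n) * L / real k"
      using p2 kpos by (intro divide_right_mono) auto
    also have "\<dots> \<le> ln (real n) * L / (L + 1)"
      using kL Lp ln1 by (intro divide_left_mono) auto
    also have "\<dots> = ln (real n) - ln (real n) / (L + 1)"
      using Lp by (simp add: field_simps)
    finally show ?thesis .
  qed
  have lnk: "ln (real k) \<le> \<beta>" using kb kpos ln_le_minus_one[of "real k"] by linarith
  have n0: "0 < n" using ln1 by (cases n) auto
  have lnm: "ln (real n) \<le> ln (real (Suc n))" using n0 by (subst ln_le_cancel_iff) auto
  have Ediv: "ln (real (Suc n) / real k) = ln (real (Suc n)) - ln (real k)"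
    using kpos by (simp add: ln_div)
  have "0 \<le> ln (real n) / (L + 1) - \<beta>" using c3 by (simp add: \<beta>_def)
  also have "\<dots> \<le> ln (real (Suc n) / real k) - a * 2 ^ k / real k"
    unfolding Ediv using q lnk lnm by linarith
  finally show "0 \<le> ln (real (Suc n) / real k) - a * 2 ^ k / real k" .
  have e2: "(2::real) ^ k = exp (real k * ln 2)" by (subst exp_of_nat_mult) simp
  have "2 ^ k * exp (- (ln (real (Suc n) / real k) - a * 2 ^ k / real k))
      = exp (real k * ln 2 - (ln (real (Suc n) / real k) - a * 2 ^ k / real k))"
    by (subst (1) e2) (simp only: exp_add[symmetric] diff_conv_add_uminus)
  also have "\<dots> \<le> exp (\<beta> * (ln 2 + 1) - ln (real n) / (L + 1))"
  proof (subst exp_le_cancel_iff)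
    have kl2: "real k * ln 2 \<le> \<beta> * ln 2" using kb by (intro mult_right_mono) auto
    have bb: "\<beta> * (ln 2 + 1) = \<beta> * ln 2 + \<beta>" by (simp add: algebra_simps)
    show "real k * ln 2 - (ln (real (Suc n) / real k) - a * 2 ^ k / real k) \<le> \<beta> * (ln 2 + 1) - ln (real n) / (L + 1)"
      unfolding Ediv using q lnk lnm kl2 bb by linarith
  qed
  finally show "2 ^ k * exp (- (ln (real (Suc n) / real k) - a * 2 ^ k / real k))
       \<le> exp (beta_fn n a * (ln 2 + 1) - ln (real n) / (L + 1))" by (simp add: \<beta>_def)
qed

lemma low_conn:
  assumes X: "X \<in> set_pmf (lower_model_hypergraph n q)" and s: "\<sigma> \<subseteq> {0..n}" "card \<sigma> = k" "1 \<le> k"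
    and G: "X \<in> Gs \<sigma>"
  shows "int k - 1 \<le> complex_dim (lower_complex X)"
proof -
  define Y where "Y = lower_complex X"
  have fY: "finite Y" using lower_complex_faces[OF X] by (simp add: Y_def)
  have sne: "\<sigma> \<noteq> {}" using s by auto
  have sY: "\<sigma> \<in> Y" using G sne unfolding Y_def lower_complex_def Gs_def Fs_def by auto
  then have Yne: "Y \<noteq> {}" by auto
  have "card \<sigma> \<le> Max (card ` Y)" using fY sY by (intro Max_ge) auto
  then show ?thesis using Yne s unfolding Y_def[symmetric] by (simp add: complex_dim_def)
qed

lemma tend0:
  fixes f g :: "nat \<Rightarrow> real"
  assumes "eventually (\<lambda>n. 0 \<le> f n \<and> f n \<le> g n) sequentially" "g \<longlonglongrightarrow> 0"
  shows "f \<longlonglongrightarrow> 0"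
  by (rule tendsto_sandwich[of "\<lambda>_. 0" f sequentially g])
     (use assms in \<open>auto elim: eventually_mono\<close>)

lemma ev_ge:
  fixes f :: "nat \<Rightarrow> real"
  assumes "filterlim f at_top sequentially"
  shows "eventually (\<lambda>n. c \<le> f n) sequentially"
  using assms by (simp add: filterlim_at_top)

theorem proposition5p1:
  fixes a A \<epsilon>0 :: real
    and p :: "nat \<Rightarrow> nat set \<Rightarrow> real"
  assumes "0 < A" and "A \<le> a" and "0 < \<epsilon>0"
    and "\<And>n \<sigma>. \<sigma> \<in> faces_of n \<Longrightarrow> exp (- a) \<le> p n \<sigma> \<and> p n \<sigma> \<le> exp (- A)"
  shows "(\<lambda>n. measure_pmf.prob (lower_model_hypergraph n (p n))
            {X. \<lfloor>beta_fn n a\<rfloor> - 1 \<le> complex_dim (lower_complex X) \<and>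
                real_of_int (complex_dim (lower_complex X)) \<le> beta_fn n A - 1 + \<epsilon>0})
         \<longlonglongrightarrow> 1"
proof -
  note A0 = assms(1) and e0 = assms(3) and pb = assms(4)
  have a0: "0 < a" using assms(1,2) by simp
  define L where "L = (\<lambda>n::nat. log 2 (ln (real n)))"
  define M where "M = (\<lambda>n. lower_model_hypergraph n (p n))"
  define LB where "LB = (\<lambda>n. {X. \<not> (\<lfloor>beta_fn n a\<rfloor> - 1 \<le> complex_dim (lower_complex X))})"
  define UB where "UB = (\<lambda>n. {X. beta_fn n A + \<epsilon>0 - 1 < real_of_int (complex_dim (lower_complex X))})"
  have expA: "exp (- A) \<le> 1" using A0 by simp
  have low: "(\<lambda>n. measure_pmf.prob (M n) (LB n)) \<longlonglongrightarrow> 0"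
  proof (rule tend0)
    show "(\<lambda>n::nat. exp (beta_fn n a * (ln 2 + 1) - ln (real n) / (L n + 1))) \<longlonglongrightarrow> 0"
      unfolding beta_fn_def L_def by real_asymp
    have e1: "eventually (\<lambda>n::nat. 2 \<le> ln (real n)) sequentially"
      by (rule ev_ge) real_asymp
    have e2: "eventually (\<lambda>n::nat. 2 \<le> beta_fn n a - L n) sequentially"
      by (rule ev_ge) (unfold beta_fn_def L_def, real_asymp)
    have e3: "eventually (\<lambda>n::nat. 0 \<le> real n - beta_fn n a) sequentially"
      by (rule ev_ge) (unfold beta_fn_def, real_asymp)
    have e4: "eventually (\<lambda>n::nat. 0 \<le> ln (real n) / (L n + 1) - beta_fn n a) sequentially"
      by (rule ev_ge) (unfold beta_fn_def L_def, real_asymp)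
    show "eventually (\<lambda>n. 0 \<le> measure_pmf.prob (M n) (LB n) \<and>
            measure_pmf.prob (M n) (LB n) \<le> exp (beta_fn n a * (ln 2 + 1) - ln (real n) / (L n + 1))) sequentially"
      using e1 e2 e3 e4
    proof eventually_elim
      case (elim n)
      define k where "k = nat \<lfloor>beta_fn n a\<rfloor>"
      have c: "1 < ln (real n)" "L n + 2 \<le> beta_fn n a" "beta_fn n a \<le> real n"
        "beta_fn n a \<le> ln (real n) / (L n + 1)" using elim by auto
      note lb = lower_bound_n[OF a0 c[unfolded L_def], folded k_def L_def]
      have qb: "\<And>\<tau>. \<tau> \<in> faces_of n \<Longrightarrow> exp (- a) \<le> p n \<tau> \<and> p n \<tau> \<le> 1"
        using pb expA by (meson order_trans)
      have kf: "int k = \<lfloor>beta_fn n a\<rfloor>" using lb(1) unfolding k_def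
        by (cases "0 \<le> \<lfloor>beta_fn n a\<rfloor>") auto
      have sub: "LB n \<inter> set_pmf (M n) \<subseteq> {X. \<forall>\<sigma>\<in>{\<sigma>. \<sigma> \<subseteq> {0..n} \<and> card \<sigma> = k}. X \<notin> Gs \<sigma>}"
      proof (safe)
        fix X \<sigma> assume X: "X \<in> LB n" "X \<in> set_pmf (M n)" and s: "\<sigma> \<subseteq> {0..n}" "X \<in> Gs \<sigma>" "k = card \<sigma>"
        have "int k - 1 \<le> complex_dim (lower_complex X)"
          using low_conn[of X n "p n" \<sigma> k] X s lb(1) by (simp add: M_def)
        then show False using X(1) kf by (simp add: LB_def)
      qed
      have "measure_pmf.prob (M n) (LB n) = measure_pmf.prob (M n) (LB n \<inter> set_pmf (M n))"
        by (simp add: measure_Int_set_pmf)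
      also have "\<dots> \<le> measure_pmf.prob (M n) {X. \<forall>\<sigma>\<in>{\<sigma>. \<sigma> \<subseteq> {0..n} \<and> card \<sigma> = k}. X \<notin> Gs \<sigma>}"
        using sub by (intro measure_pmf.finite_measure_mono) auto
      also have "\<dots> \<le> 2 ^ k * exp (- (ln (real (Suc n) / real k) - a * 2 ^ k / real k))"
        unfolding M_def by (rule lower_fixed[OF qb lb(1) lb(2) a0 lb(3)])
      also have "\<dots> \<le> exp (beta_fn n a * (ln 2 + 1) - ln (real n) / (L n + 1))"
        using lb(4) by (simp add: L_def)
      finally show ?case by simp
    qed
  qed
  have up: "(\<lambda>n. measure_pmf.prob (M n) (UB n)) \<longlonglongrightarrow> 0"
  proof (rule tend0)
    define d where "d = (2 powr \<epsilon>0 - 1) / 2"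
    have d0: "0 < d" using e0 by (simp add: d_def)
    show "(\<lambda>n. exp (- (d * (L n * ln (real n))))) \<longlonglongrightarrow> 0"
      by (rule exp_to_zero[OF d0]) (unfold L_def, real_asymp)
    have e1: "eventually (\<lambda>n::nat. 2 \<le> ln (real n)) sequentially"
      by (rule ev_ge) real_asymp
    have e2: "eventually (\<lambda>n::nat. 0 \<le> beta_fn n A) sequentially"
      by (rule ev_ge) (unfold beta_fn_def, real_asymp)
    have hlim: "(\<lambda>n::nat. ((beta_fn n A + \<epsilon>0 + 1) * ln (real (Suc n)) - L n * ln (real n) + A) / (L n * ln (real n))) \<longlonglongrightarrow> 0"
      unfolding beta_fn_def L_def by real_asymp
    have e3: "eventually (\<lambda>n::nat. ((beta_fn n A + \<epsilon>0 + 1) * ln (real (Suc n)) - L n * ln (real n) + A) / (L n * ln (real n)) < d) sequentially"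
      by (rule order_tendstoD(2)[OF hlim d0])
    show "eventually (\<lambda>n. 0 \<le> measure_pmf.prob (M n) (UB n) \<and>
            measure_pmf.prob (M n) (UB n) \<le> exp (- (d * (L n * ln (real n))))) sequentially"
      using e1 e2 e3
    proof eventually_elim
      case (elim n)
      have qb: "\<And>\<tau>. \<tau> \<in> faces_of n \<Longrightarrow> 0 \<le> p n \<tau> \<and> p n \<tau> \<le> exp (- A)"
        using pb by (meson exp_ge_zero order_trans)
      have "measure_pmf.prob (M n) (UB n)
         \<le> real (Suc n) ^ (nat \<lfloor>beta_fn n A + \<epsilon>0\<rfloor> + 1) * exp (- A) ^ (2 ^ (nat \<lfloor>beta_fn n A + \<epsilon>0\<rfloor> + 1) - 1)"
        unfolding M_def UB_def using upper_fixed[OF qb A0, where b = "beta_fn n A + \<epsilon>0"] elim e0 by simp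
      also have "\<dots> \<le> exp (- ((2 powr \<epsilon>0 - 1) / 2 * (log 2 (ln (real n)) * ln (real n))))"
        by (rule upper_bound_n[OF A0 e0]) (use elim in \<open>auto simp: L_def d_def\<close>)
      finally show ?case by (simp add: d_def L_def)
    qed
  qed
  define Good where "Good = (\<lambda>n. {X. \<lfloor>beta_fn n a\<rfloor> - 1 \<le> complex_dim (lower_complex X) \<and>
                real_of_int (complex_dim (lower_complex X)) \<le> beta_fn n A - 1 + \<epsilon>0})"
  have lowerb: "1 - (measure_pmf.prob (M n) (LB n) + measure_pmf.prob (M n) (UB n)) \<le> measure_pmf.prob (M n) (Good n)" for n
  proof -
    have "UNIV - Good n \<subseteq> LB n \<union> UB n" by (auto simp: Good_def LB_def UB_def)
    then have "measure_pmf.prob (M n) (UNIV - Good n) \<le> measure_pmf.prob (M n) (LB n \<union> UB n)"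
      by (intro measure_pmf.finite_measure_mono) auto
    also have "\<dots> \<le> measure_pmf.prob (M n) (LB n) + measure_pmf.prob (M n) (UB n)"
      by (rule measure_subadditive) (auto simp: measure_pmf.emeasure_eq_measure)
    finally show ?thesis using measure_pmf.prob_compl[of "Good n" "M n"] by simp
  qed
  have "(\<lambda>n. measure_pmf.prob (M n) (Good n)) \<longlonglongrightarrow> 1"
  proof (rule tendsto_sandwich[of "\<lambda>n. 1 - (measure_pmf.prob (M n) (LB n) + measure_pmf.prob (M n) (UB n))" _ _ "\<lambda>_. 1"])
    show "eventually (\<lambda>n. 1 - (measure_pmf.prob (M n) (LB n) + measure_pmf.prob (M n) (UB n)) \<le> measure_pmf.prob (M n) (Good n)) sequentially"
      using lowerb by simp
    show "eventually (\<lambda>n. measure_pmf.prob (M n) (Good n) \<le> 1) sequentially" by simp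
    show "(\<lambda>n. 1 - (measure_pmf.prob (M n) (LB n) + measure_pmf.prob (M n) (UB n))) \<longlonglongrightarrow> 1"
      using tendsto_diff[OF tendsto_const tendsto_add[OF low up], of 1] by simp
  qed simp
  then show ?thesis by (simp add: M_def Good_def)
qed

end
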